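(* Let $b\ge 2$ and let $N$ be a $b$-wMRH number with $k$ base-$b$ digits and with multiplicative extra term $A\ge 1$. Then $k\le A+4$ if $b\ge 6$, and $k\le A+5$ if $2\le b\le 5$.
   Context: Fix a base $b\ge 2$. $s_b(N)$ is the sum of the base-$b$ digits of $N$. For a positive integer $X$, its reversal $X^R$ is the integer whose base-$b$ representation is that of $X$ written in reverse order (leading zeros of the result are dropped). A positive integer $N$ is a $b$-wMRH number if there exists an integer $A\ge 0$, called a multiplicative extra term of $N$, such that $N=(A+s_b(N))\cdot(A+s_b(N))^R$. *)

theory Defs
  imports Main
begin

fun digits :: "nat \<Rightarrow> nat \<Rightarrow> nat list" where
  "digits b n = (if b < 2 \<or> n = 0 then [] else n mod b # digits b (n div b))"

declare digits.simps[simp del]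

fun from_digits :: "nat \<Rightarrow> nat list \<Rightarrow> nat" where
  "from_digits b [] = 0"
| "from_digits b (d # ds) = d + b * from_digits b ds"

definition digit_sum :: "nat \<Rightarrow> nat \<Rightarrow> nat" where
  "digit_sum b n = sum_list (digits b n)"

definition num_digits :: "nat \<Rightarrow> nat \<Rightarrow> nat" where
  "num_digits b n = length (digits b n)"

text \<open>Reversal: the number whose base-b representation is that of n read backwards
  (leading zeros of the result are automatically dropped).\<close>
definition reversal :: "nat \<Rightarrow> nat \<Rightarrow> nat" where
  "reversal b n = from_digits b (rev (digits b n))"

definition mult_extra_term :: "nat \<Rightarrow> nat \<Rightarrow> nat \<Rightarrow> bool" where
  "mult_extra_term b N A \<longleftrightarrow>
     N = (A + digit_sum b N) * reversal b (A + digit_sum b N)"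

definition wMRH :: "nat \<Rightarrow> nat \<Rightarrow> bool" where
  "wMRH b N \<longleftrightarrow> 0 < N \<and> (\<exists>A. mult_extra_term b N A)"

end

theory Submission
  imports Defs
begin

lemma len_digits_le: "b \<ge> 2 \<Longrightarrow> length (digits b n) \<le> L \<longleftrightarrow> n < b ^ L"
proof (induction L arbitrary: n)
  case 0
  then show ?case by (subst digits.simps) auto
next
  case (Suc L)
  show ?case
  proof (cases "n = 0")
    case True then show ?thesis using Suc.prems by (subst digits.simps) auto
  next
    case False
    then have "digits b n = n mod b # digits b (n div b)" using Suc.prems by (subst digits.simps) auto
    then have "length (digits b n) \<le> Suc L \<longleftrightarrow> n div b < b ^ L" using Suc by simp
    also have "\<dots> \<longleftrightarrow> n < b ^ Suc L" using Suc.prems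
      by (simp add: div_less_iff_less_mult mult.commute)
    finally show ?thesis .
  qed
qed

lemma digits_lt: "b \<ge> 2 \<Longrightarrow> x \<in> set (digits b n) \<Longrightarrow> x < b"
proof (induction b n rule: digits.induct)
  case (1 b n)
  show ?case
  proof (cases "n = 0")
    case True then show ?thesis using 1 by (subst (asm) digits.simps) auto
  next
    case False
    then have "digits b n = n mod b # digits b (n div b)" using 1 by (subst digits.simps) auto
    then show ?thesis using 1 False by auto
  qed
qed

lemma sum_list_bound: "(\<forall>x\<in>set xs. x \<le> c) \<Longrightarrow> sum_list xs \<le> length xs * c"
  by (induction xs) auto

lemma from_digits_lt: "b \<ge> 1 \<Longrightarrow> (\<forall>x\<in>set xs. x < b) \<Longrightarrow> from_digits b xs < b ^ length xs"
proof (induction xs)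
  case Nil then show ?case by simp
next
  case (Cons d xs)
  then have "from_digits b xs + 1 \<le> b ^ length xs" by auto
  then have "b * from_digits b xs + b \<le> b * b ^ length xs"
    by (metis add_mult_distrib2 mult.right_neutral mult_le_mono2)
  then show ?case using Cons.prems by auto
qed

lemma ds_bound: "b \<ge> 2 \<Longrightarrow> digit_sum b n \<le> num_digits b n * (b - 1)"
  unfolding digit_sum_def num_digits_def
  by (rule sum_list_bound) (use digits_lt in fastforce)

lemma rev_bound: "b \<ge> 2 \<Longrightarrow> reversal b n < b ^ num_digits b n"
  unfolding reversal_def num_digits_def
  using from_digits_lt[of b "rev (digits b n)"] digits_lt[of b _ n] by auto

lemma pow6: "m \<ge> 3 \<Longrightarrow> b \<ge> 6 \<Longrightarrow> 2*b*m \<le> b^(m-1)"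
proof (induction m rule: dec_induct)
  case base
  then show ?case using mult_le_mono1[of 6 b b] by (simp add: power2_eq_square)
next
  case (step n)
  have "2*n \<le> b*n" using step by (intro mult_le_mono1) simp
  then have "Suc n \<le> b*n" using step by linarith
  then have "2*b*Suc n \<le> 2*b*(b*n)" by (rule mult_le_mono2)
  also have "\<dots> = b * (2*b*n)" by (simp add: algebra_simps)
  also have "\<dots> \<le> b * b^(n-1)" using step by simp
  also have "\<dots> = b^(Suc n - 1)" using step by (cases n) auto
  finally show ?case .
qed

lemma pow3: "m \<ge> 4 \<Longrightarrow> b \<ge> 3 \<Longrightarrow> 2*b*m \<le> b^(m-1)"
proof (induction m rule: dec_induct)
  case base
  have "9 \<le> b*b" using base mult_le_mono[of 3 b 3 b] by simp
  then have "8*b \<le> (b*b)*b" using mult_le_mono1[of 8 "b*b" b] by simp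
  then show ?case by (simp add: numeral_eq_Suc)
next
  case (step n)
  have "2*n \<le> b*n" using step by (intro mult_le_mono1) simp
  then have "Suc n \<le> b*n" using step by linarith
  then have "2*b*Suc n \<le> 2*b*(b*n)" by (rule mult_le_mono2)
  also have "\<dots> = b * (2*b*n)" by (simp add: algebra_simps)
  also have "\<dots> \<le> b * b^(n-1)" using step by simp
  also have "\<dots> = b^(Suc n - 1)" using step by (cases n) auto
  finally show ?case .
qed

lemma pow2: "m \<ge> 5 \<Longrightarrow> 4*m \<le> (2::nat)^(m-1) + 5"
proof (induction m rule: dec_induct)
  case base
  then show ?case by (simp add: numeral_eq_Suc)
next
  case (step m)
  have "(2::nat)^(Suc m - 1) = 2 * 2^(m-1)" using step by (cases m) auto
  then show ?case using step by simp
qed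

lemma small_aux: "M \<in> {8..15} \<Longrightarrow> num_digits 2 (M*reversal 2 M) + digit_sum 2 (M*reversal 2 M) \<le> M + 5"
proof -
  assume "M \<in> {8..15}"
  then have "M = 8 \<or> M = 9 \<or> M = 10 \<or> M = 11 \<or> M = 12 \<or> M = 13 \<or> M = 14 \<or> M = 15"
    by auto
  then show ?thesis
    by (elim disjE) (simp_all add: digit_sum_def num_digits_def reversal_def digits.simps)
qed

lemma small_case:
  assumes "M \<ge> 8" "M < 16" "N = M * reversal 2 M" "M = A + digit_sum 2 N"
  shows "num_digits 2 N \<le> A + 5"
proof -
  have "M \<in> {8..15}" using assms(1,2) by auto
  from small_aux[OF this] assms(3) have "num_digits 2 N + digit_sum 2 N \<le> M + 5" by simp
  with assms(4) show ?thesis by linarith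
qed

theorem mainTheorem19:
  fixes b N A :: nat
  assumes "b \<ge> 2"
    and "wMRH b N"
    and "mult_extra_term b N A"
    and "A \<ge> 1"
  shows "(b \<ge> 6 \<longrightarrow> num_digits b N \<le> A + 4)
       \<and> (b \<le> 5 \<longrightarrow> num_digits b N \<le> A + 5)"
proof -
  define M where "M = A + digit_sum b N"
  have NM: "N = M * reversal b M" using assms(3) unfolding mult_extra_term_def M_def by simp
  have Npos: "N > 0" using assms(2) unfolding wMRH_def by simp
  then have Mpos: "M > 0" using NM by (cases M) auto
  define m where "m = num_digits b M"
  define k where "k = num_digits b N"
  have hM: "M < b^m" using len_digits_le[OF assms(1), of M m] unfolding m_def num_digits_def by simp
  have hR: "reversal b M < b^m" using rev_bound[OF assms(1)] unfolding m_def by simp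
  have "N < b^m * b^m" unfolding NM using hM hR assms(1) by (intro mult_strict_mono) auto
  then have "N < b^(2*m)" by (simp add: power_add[symmetric] mult_2)
  then have k2m: "k \<le> 2*m" using len_digits_le[OF assms(1), of N "2*m"] unfolding k_def num_digits_def by simp
  have m1: "m \<ge> 1" using hM Mpos by (cases m) auto
  have lowM: "b^(m-1) \<le> M"
  proof (rule ccontr)
    assume "\<not> b^(m-1) \<le> M"
    then have "length (digits b M) \<le> m - 1" using len_digits_le[OF assms(1), of M "m-1"] by simp
    then show False using m1 unfolding m_def num_digits_def by simp
  qed
  have ds: "digit_sum b N \<le> k * (b-1)" using ds_bound[OF assms(1)] unfolding k_def by simp
  have "k * (b-1) \<le> 2*m*(b-1)" using k2m by (rule mult_le_mono1)
  moreover have "2*m*(b-1) + 2*m = 2*b*m" using assms(1) by (cases b) (auto simp: algebra_simps)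
  ultimately have key: "b^(m-1) + 2*m \<le> A + 2*b*m" using lowM ds unfolding M_def by linarith
  show ?thesis
  proof (intro conjI impI)
    assume b6: "b \<ge> 6"
    show "num_digits b N \<le> A + 4"
    proof (cases "m \<ge> 3")
      case True
      then have "2*b*m \<le> b^(m-1)" using pow6 b6 by blast
      then show ?thesis using key k2m unfolding k_def by linarith
    next
      case False then show ?thesis using k2m unfolding k_def by linarith
    qed
  next
    assume b5: "b \<le> 5"
    show "num_digits b N \<le> A + 5"
    proof (cases "m \<ge> 4")
      case False then show ?thesis using k2m assms(4) unfolding k_def by linarith
    next
      case m4: True
      show ?thesis
      proof (cases "b \<ge> 3")
        case True
        then have "2*b*m \<le> b^(m-1)" using pow3 m4 by blast
        then show ?thesis using key k2m unfolding k_def by linarith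
      next
        case False
        then have b2: "b = 2" using assms(1) by simp
        show ?thesis
        proof (cases "m \<ge> 5")
          case True
          then have "4*m \<le> b^(m-1) + 5" using pow2 b2 by blast
          then show ?thesis using key k2m b2 unfolding k_def by simp
        next
          case False
          then have "m = 4" using m4 by simp
          then have "M \<ge> 8" "M < 16" using lowM hM b2 by auto
          moreover have "M = A + digit_sum 2 N" using M_def b2 by simp
          ultimately show ?thesis using small_case[of M N A] NM b2 by blast
        qed
      qed
    qed
  qed
qed

end
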